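(* If a sequence $G_n$ of finite random directed graphs converges in the local weak sense to the random rooted directed graph $(G,o)$, then the bipartite representations $G'_n$ converge in the local weak sense to $(G',o')$, where $G'$ is the bipartite representation of $G$ and the root $o'$ is $o^-$ or $o^+$ with probability $1/2$ each. The converse does not hold: the convergence of the sequence of bipartite representations $G'_n$ does not imply the convergence of $G_n$. In fact, there are different random directed rooted graphs $(G_1,o_1)$ and $(G_2,o_2)$, each of which is the local weak limit of a sequence of finite random graphs, such that their bipartite representations $(G'_1,o'_1)$ and $(G'_2,o'_2)$ (with roots chosen as $o_i^-$ or $o_i^+$ with probability $1/2$ each) are isomorphic as random rooted graphs.
   Context: Graphs are locally finite, possibly with multiple edges and loops. The bipartite representation of a directed graph $G=(V,E)$ is the bipartite undirected graph $G'=(V^-,V^+,E')$ with $V^-=\{v^-: v\in V\}$, $V^+=\{v^+: v\in V\}$ and $E'=\{\{v^-,w^+\}: (v,w)\in E\}$. A sequence $(G_n,o)$ of locally finite random rooted (directed) graphs converges in the local weak sense to the locally finite connected random rooted (directed) graph $(G,o)$ if for every positive integer $r$ and every finite rooted (directed) graph $(H,o)$ we have $\mathbb{P}(B_{G_n}(o,r)\simeq (H,o))\to \mathbb{P}(B_{G}(o,r)\simeq (H,o))$, where $B_G(x,r)$ is the ball of radius $r$ around $x$ in the graph metric and $\simeq$ denotes rooted isomorphism. For non-rooted finite graphs $G_n$, local weak convergence means convergence of $G_n$ with a root chosen uniformly at random among its vertices. *)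

theory Defs
  imports "HOL-Probability.Probability"
begin

text \<open>A (directed, locally finite) multigraph with loops: a vertex set together with an
  edge-multiplicity function; E v w is the number of edges from v to w.
  An undirected multigraph is represented by a symmetric multiplicity function.\<close>

type_synonym 'v graph = "'v set \<times> ('v \<Rightarrow> 'v \<Rightarrow> nat)"
type_synonym 'v rgraph = "'v graph \<times> 'v"

definition wf_graph :: "'v graph \<Rightarrow> bool" where
  "wf_graph G \<longleftrightarrow> (\<forall>v w. snd G v w > 0 \<longrightarrow> v \<in> fst G \<and> w \<in> fst G)"

definition adj :: "('v \<Rightarrow> 'v \<Rightarrow> nat) \<Rightarrow> 'v \<Rightarrow> 'v \<Rightarrow> bool" where
  "adj E v w \<longleftrightarrow> E v w > 0 \<or> E w v > 0"

definition locally_finite :: "'v graph \<Rightarrow> bool" where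
  "locally_finite G \<longleftrightarrow> (\<forall>v\<in>fst G. finite {w. adj (snd G) v w})"

fun bset :: "('v \<Rightarrow> 'v \<Rightarrow> nat) \<Rightarrow> 'v \<Rightarrow> nat \<Rightarrow> 'v set" where
  "bset E x 0 = {x}"
| "bset E x (Suc r) = bset E x r \<union> {w. \<exists>v\<in>bset E x r. adj E v w}"

definition connected_rooted :: "'v rgraph \<Rightarrow> bool" where
  "connected_rooted g \<longleftrightarrow> snd g \<in> fst (fst g) \<and> fst (fst g) = (\<Union>r. bset (snd (fst g)) (snd g) r)"

definition ball :: "'v rgraph \<Rightarrow> nat \<Rightarrow> 'v rgraph" where
  "ball g r = (let E = snd (fst g); B = bset E (snd g) r in
     ((B, \<lambda>v w. if v \<in> B \<and> w \<in> B then E v w else 0), snd g))"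

definition rooted_iso :: "'a rgraph \<Rightarrow> 'b rgraph \<Rightarrow> bool" where
  "rooted_iso g h \<longleftrightarrow> snd g \<in> fst (fst g) \<and>
     (\<exists>f. bij_betw f (fst (fst g)) (fst (fst h)) \<and> f (snd g) = snd h \<and>
          (\<forall>v\<in>fst (fst g). \<forall>w\<in>fst (fst g). snd (fst h) (f v) (f w) = snd (fst g) v w))"

definition finite_rgraph :: "nat rgraph \<Rightarrow> bool" where
  "finite_rgraph h \<longleftrightarrow> wf_graph (fst h) \<and> finite (fst (fst h)) \<and> snd h \<in> fst (fst h)"

definition random_rooted_graph :: "'v rgraph measure \<Rightarrow> bool" where
  "random_rooted_graph M \<longleftrightarrow> prob_space M \<and>
     (\<forall>g\<in>space M. wf_graph (fst g) \<and> locally_finite (fst g) \<and> connected_rooted g) \<and>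
     (\<forall>r (H::nat rgraph). {g\<in>space M. rooted_iso (ball g r) H} \<in> sets M)"

definition ball_prob :: "'v rgraph measure \<Rightarrow> nat \<Rightarrow> nat rgraph \<Rightarrow> real" where
  "ball_prob M r H = measure M {g\<in>space M. rooted_iso (ball g r) H}"

definition finite_random_graph :: "'v graph pmf \<Rightarrow> bool" where
  "finite_random_graph N \<longleftrightarrow>
     (\<forall>G\<in>set_pmf N. wf_graph G \<and> finite (fst G) \<and> fst G \<noteq> {})"

definition rooted_unif :: "'v graph pmf \<Rightarrow> 'v rgraph pmf" where
  "rooted_unif N = N \<bind> (\<lambda>G. map_pmf (\<lambda>v. (G, v)) (pmf_of_set (fst G)))"

text \<open>Local weak convergence of finite random graphs Gs n to a limit law described by
  the limiting ball probabilities L r H.\<close>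
definition lw_conv :: "(nat \<Rightarrow> 'v graph pmf) \<Rightarrow> (nat \<Rightarrow> nat rgraph \<Rightarrow> real) \<Rightarrow> bool" where
  "lw_conv Gs L \<longleftrightarrow> (\<forall>r H. finite_rgraph H \<longrightarrow>
     (\<lambda>n. measure_pmf.prob (rooted_unif (Gs n)) {g. rooted_iso (ball g r) H})
       \<longlonglongrightarrow> L r H)"

text \<open>Bipartite representation: v^- = (v, False), v^+ = (v, True).\<close>
definition bip :: "'v graph \<Rightarrow> ('v \<times> bool) graph" where
  "bip G = (fst G \<times> UNIV,
     \<lambda>a b. if \<not> snd a \<and> snd b then snd G (fst a) (fst b)
           else if snd a \<and> \<not> snd b then snd G (fst b) (fst a) else 0)"

text \<open>Ball probabilities of (G', o') with o' = o^- or o^+ with probability 1/2 each.\<close>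
definition bip_ball_prob :: "'v rgraph measure \<Rightarrow> nat \<Rightarrow> nat rgraph \<Rightarrow> real" where
  "bip_ball_prob M r H =
     (measure M {g\<in>space M. rooted_iso (ball (bip (fst g), (snd g, False)) r) H}
    + measure M {g\<in>space M. rooted_iso (ball (bip (fst g), (snd g, True)) r) H}) / 2"

end

theory Submission
  imports Defs
begin
definition bipE :: "('v \<Rightarrow> 'v \<Rightarrow> nat) \<Rightarrow> ('v \<times> bool) \<Rightarrow> ('v \<times> bool) \<Rightarrow> nat" where
  "bipE E = (\<lambda>a b. if \<not> snd a \<and> snd b then E (fst a) (fst b)
           else if snd a \<and> \<not> snd b then E (fst b) (fst a) else 0)"

lemma bip_eq: "bip G = (fst G \<times> UNIV, bipE (snd G))"
  by (simp add: bip_def bipE_def)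

lemma ball_eq: "ball ((V,E),x) r = ((bset E x r, \<lambda>v w. if v \<in> bset E x r \<and> w \<in> bset E x r then E v w else 0), x)"
  by (simp add: ball_def Let_def)

lemma bset_root: "x \<in> bset E x k"
  by (induction k) auto

lemma bset_mono: "k \<le> m \<Longrightarrow> bset E x k \<subseteq> bset E x m"
  by (induction m) (auto simp: le_Suc_eq)

lemma bset_adj: "v \<in> bset E x k \<Longrightarrow> adj E v w \<Longrightarrow> w \<in> bset E x (Suc k)"
  by auto

lemma bset_agree:
  assumes "\<forall>k<r. \<forall>v\<in>bset E1 x k. \<forall>w. E1 v w = E2 v w \<and> E1 w v = E2 w v" "k \<le> r"
  shows "bset E1 x k = bset E2 x k"
  using assms(2)
proof (induction k)
  case 0 then show ?case by simp
next
  case (Suc k)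
  then have IH: "bset E1 x k = bset E2 x k" and kr: "k < r" by auto
  have "\<forall>v\<in>bset E1 x k. \<forall>w. adj E1 v w = adj E2 v w"
    using assms(1) kr by (auto simp: adj_def)
  then show ?case using IH by auto
qed

lemma bset_iso:
  assumes f: "bij_betw f V1 V2"
    and s1: "\<forall>v w. E1 v w > 0 \<longrightarrow> v \<in> V1 \<and> w \<in> V1"
    and s2: "\<forall>v w. E2 v w > 0 \<longrightarrow> v \<in> V2 \<and> w \<in> V2"
    and p: "\<forall>v\<in>V1. \<forall>w\<in>V1. E2 (f v) (f w) = E1 v w"
    and x: "x \<in> V1"
  shows "bset E2 (f x) k = f ` bset E1 x k \<and> bset E1 x k \<subseteq> V1"
proof (induction k)
  case 0 then show ?case using x by simp
next
  case (Suc k)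
  have IH1: "bset E2 (f x) k = f ` bset E1 x k" and IH2: "bset E1 x k \<subseteq> V1"
    using Suc by blast+
  have adjV1: "\<And>v w. adj E1 v w \<Longrightarrow> w \<in> V1" using s1 unfolding adj_def by blast
  have adjV2: "\<And>v w. adj E2 v w \<Longrightarrow> w \<in> V2" using s2 unfolding adj_def by blast
  have adjf: "\<And>v w. v \<in> V1 \<Longrightarrow> w \<in> V1 \<Longrightarrow> adj E2 (f v) (f w) = adj E1 v w"
    using p unfolding adj_def by simp
  have A: "{w. \<exists>v\<in>bset E2 (f x) k. adj E2 v w} = f ` {w. \<exists>v\<in>bset E1 x k. adj E1 v w}"
  proof
    show "{w. \<exists>v\<in>bset E2 (f x) k. adj E2 v w} \<subseteq> f ` {w. \<exists>v\<in>bset E1 x k. adj E1 v w}"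
    proof
      fix w' assume "w' \<in> {w. \<exists>v\<in>bset E2 (f x) k. adj E2 v w}"
      then obtain v' where v': "v' \<in> bset E2 (f x) k" "adj E2 v' w'" by blast
      then obtain v where v: "v \<in> bset E1 x k" "v' = f v" using IH1 by blast
      have "w' \<in> V2" using v' adjV2 by blast
      then obtain w where w: "w \<in> V1" "w' = f w" using f unfolding bij_betw_def by blast
      have "v \<in> V1" using v IH2 by blast
      then have "adj E1 v w" using adjf[of v w] v v' w by simp
      then show "w' \<in> f ` {w. \<exists>v\<in>bset E1 x k. adj E1 v w}" using v w by blast
    qed
    show "f ` {w. \<exists>v\<in>bset E1 x k. adj E1 v w} \<subseteq> {w. \<exists>v\<in>bset E2 (f x) k. adj E2 v w}"
    proof
      fix w' assume "w' \<in> f ` {w. \<exists>v\<in>bset E1 x k. adj E1 v w}"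
      then obtain v w where vw: "w' = f w" "v \<in> bset E1 x k" "adj E1 v w" by blast
      have "w \<in> V1" using vw adjV1 by blast
      moreover have "v \<in> V1" using vw IH2 by blast
      ultimately have "adj E2 (f v) (f w)" using adjf[of v w] vw by simp
      moreover have "f v \<in> bset E2 (f x) k" using IH1 vw by blast
      ultimately show "w' \<in> {w. \<exists>v\<in>bset E2 (f x) k. adj E2 v w}" using vw by blast
    qed
  qed
  have B: "{w. \<exists>v\<in>bset E1 x k. adj E1 v w} \<subseteq> V1" using adjV1 by blast
  have "bset E2 (f x) (Suc k) = f ` bset E1 x (Suc k)"
    unfolding bset.simps image_Un using IH1 A by simp
  moreover have "bset E1 x (Suc k) \<subseteq> V1" unfolding bset.simps using IH2 B by blast
  ultimately show ?case by blast
qed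

lemma iso_ball:
  assumes f: "bij_betw f V1 V2"
    and s1: "\<forall>v w. E1 v w > 0 \<longrightarrow> v \<in> V1 \<and> w \<in> V1"
    and s2: "\<forall>v w. E2 v w > 0 \<longrightarrow> v \<in> V2 \<and> w \<in> V2"
    and p: "\<forall>v\<in>V1. \<forall>w\<in>V1. E2 (f v) (f w) = E1 v w"
    and x: "x \<in> V1"
  shows "rooted_iso (ball ((W1,E1),x) r) (ball ((W2,E2),f x) r)"
proof -
  note I = bset_iso[OF assms, of r]
  have I1: "bset E2 (f x) r = f ` bset E1 x r" and I2: "bset E1 x r \<subseteq> V1" using I by blast+
  have "inj_on f (bset E1 x r)" using f I2 unfolding bij_betw_def using inj_on_subset by blast
  then have bj: "bij_betw f (bset E1 x r) (bset E2 (f x) r)" using I1 unfolding bij_betw_def by blast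
  have pr: "\<forall>v\<in>bset E1 x r. \<forall>w\<in>bset E1 x r.
      (if f v \<in> bset E2 (f x) r \<and> f w \<in> bset E2 (f x) r then E2 (f v) (f w) else 0) =
      (if v \<in> bset E1 x r \<and> w \<in> bset E1 x r then E1 v w else 0)"
  proof (intro ballI)
    fix v w assume vw: "v \<in> bset E1 x r" "w \<in> bset E1 x r"
    then have "f v \<in> bset E2 (f x) r" "f w \<in> bset E2 (f x) r" using I1 by blast+
    moreover have "E2 (f v) (f w) = E1 v w" using p vw I2 by blast
    ultimately show "(if f v \<in> bset E2 (f x) r \<and> f w \<in> bset E2 (f x) r then E2 (f v) (f w) else 0) =
      (if v \<in> bset E1 x r \<and> w \<in> bset E1 x r then E1 v w else 0)" using vw by simp
  qed
  show ?thesis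
    unfolding ball_eq rooted_iso_def fst_conv snd_conv
    apply (rule conjI)
     apply (rule bset_root)
    apply (rule exI[of _ f])
    using bj pr by blast
qed

lemma rooted_iso_D:
  assumes "rooted_iso g h"
  obtains f where "bij_betw f (fst (fst g)) (fst (fst h))" "f (snd g) = snd h"
    "\<forall>v\<in>fst (fst g). \<forall>w\<in>fst (fst g). snd (fst h) (f v) (f w) = snd (fst g) v w"
    "snd g \<in> fst (fst g)"
proof -
  have "snd g \<in> fst (fst g) \<and> (\<exists>f. bij_betw f (fst (fst g)) (fst (fst h)) \<and> f (snd g) = snd h \<and>
          (\<forall>v\<in>fst (fst g). \<forall>w\<in>fst (fst g). snd (fst h) (f v) (f w) = snd (fst g) v w))"
    using assms unfolding rooted_iso_def .
  then show ?thesis using that by (elim conjE exE) 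
qed

lemma rooted_isoI:
  assumes "bij_betw f (fst (fst g)) (fst (fst h))" "f (snd g) = snd h"
    "\<forall>v\<in>fst (fst g). \<forall>w\<in>fst (fst g). snd (fst h) (f v) (f w) = snd (fst g) v w"
    "snd g \<in> fst (fst g)"
  shows "rooted_iso g h"
  unfolding rooted_iso_def using assms by (intro conjI exI[of _ f]) 

lemma rooted_iso_sym:
  assumes "rooted_iso g h" shows "rooted_iso h g"
proof -
  obtain f where f1: "bij_betw f (fst (fst g)) (fst (fst h))" and f2: "f (snd g) = snd h"
    and f3: "\<forall>v\<in>fst (fst g). \<forall>w\<in>fst (fst g). snd (fst h) (f v) (f w) = snd (fst g) v w"
    and r: "snd g \<in> fst (fst g)" using rooted_iso_D[OF assms] by metis
  define i where "i = inv_into (fst (fst g)) f"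
  have b: "bij_betw i (fst (fst h)) (fst (fst g))" using f1 unfolding i_def by (rule bij_betw_inv_into)
  have inj: "inj_on f (fst (fst g))" using f1 by (rule bij_betw_imp_inj_on)
  have ih: "i (snd h) = snd g" unfolding i_def f2[symmetric] using inj r by (rule inv_into_f_f)
  have rh: "snd h \<in> fst (fst h)" using bij_betwE[OF f1] r unfolding f2[symmetric] by blast
  have pr: "\<forall>v\<in>fst (fst h). \<forall>w\<in>fst (fst h). snd (fst g) (i v) (i w) = snd (fst h) v w"
  proof (intro ballI)
    fix v w assume vw: "v \<in> fst (fst h)" "w \<in> fst (fst h)"
    have iv: "i v \<in> fst (fst g)" "i w \<in> fst (fst g)" using bij_betwE[OF b] vw by auto
    have "f (i v) = v" "f (i w) = w" unfolding i_def using bij_betw_inv_into_right[OF f1] vw by auto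
    then show "snd (fst g) (i v) (i w) = snd (fst h) v w"
      using f3 iv by metis
  qed
  show ?thesis using rooted_isoI[OF b ih pr rh] .
qed

lemma rooted_iso_trans:
  assumes "rooted_iso g h" "rooted_iso h k" shows "rooted_iso g k"
proof -
  obtain f where f1: "bij_betw f (fst (fst g)) (fst (fst h))" and f2: "f (snd g) = snd h"
    and f3: "\<forall>v\<in>fst (fst g). \<forall>w\<in>fst (fst g). snd (fst h) (f v) (f w) = snd (fst g) v w"
    and r: "snd g \<in> fst (fst g)" using rooted_iso_D[OF assms(1)] by metis
  obtain f' where f'1: "bij_betw f' (fst (fst h)) (fst (fst k))" and f'2: "f' (snd h) = snd k"
    and f'3: "\<forall>v\<in>fst (fst h). \<forall>w\<in>fst (fst h). snd (fst k) (f' v) (f' w) = snd (fst h) v w"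
    using rooted_iso_D[OF assms(2)] by metis
  have b: "bij_betw (f' \<circ> f) (fst (fst g)) (fst (fst k))" using f1 f'1 by (rule bij_betw_trans)
  have pr: "\<forall>v\<in>fst (fst g). \<forall>w\<in>fst (fst g). snd (fst k) ((f' \<circ> f) v) ((f' \<circ> f) w) = snd (fst g) v w"
  proof (intro ballI)
    fix v w assume vw: "v \<in> fst (fst g)" "w \<in> fst (fst g)"
    then have "f v \<in> fst (fst h)" "f w \<in> fst (fst h)" using bij_betwE[OF f1] by auto
    then have "snd (fst k) (f' (f v)) (f' (f w)) = snd (fst h) (f v) (f w)" using f'3 by auto
    also have "\<dots> = snd (fst g) v w" using f3 vw by auto
    finally show "snd (fst k) ((f' \<circ> f) v) ((f' \<circ> f) w) = snd (fst g) v w" by simp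
  qed
  have "(f' \<circ> f) (snd g) = snd k" using f2 f'2 by simp
  then show ?thesis using rooted_isoI[OF b _ pr r] by blast
qed

lemma bipE_pos: "bipE E (v,c) (w,d) > 0 \<Longrightarrow> (\<not>c \<and> d \<and> E v w > 0) \<or> (c \<and> \<not>d \<and> E w v > 0)"
  by (auto simp: bipE_def split: if_splits)

lemma bip_adj: "adj (bipE E) (v,c) (w,d) \<Longrightarrow> adj E v w"
  unfolding adj_def using bipE_pos[of E v c w d] bipE_pos[of E w d v c] by auto

lemma bip_bset_sub: "bset (bipE E) (x,b) k \<subseteq> bset E x k \<times> UNIV"
proof (induction k)
  case 0 then show ?case by simp
next
  case (Suc k)
  have "{w. \<exists>v\<in>bset (bipE E) (x, b) k. adj (bipE E) v w} \<subseteq> bset E x (Suc k) \<times> UNIV"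
  proof
    fix w assume "w \<in> {w. \<exists>v\<in>bset (bipE E) (x, b) k. adj (bipE E) v w}"
    then obtain v where v: "v \<in> bset (bipE E) (x, b) k" "adj (bipE E) v w" by blast
    obtain v0 c where vv: "v = (v0,c)" by (cases v)
    obtain w0 d where ww: "w = (w0,d)" by (cases w)
    have "v0 \<in> bset E x k" using v(1) Suc vv by auto
    moreover have "adj E v0 w0" using bip_adj v(2) vv ww by metis
    ultimately show "w \<in> bset E x (Suc k) \<times> UNIV" using ww by auto
  qed
  then show ?case using Suc by auto
qed

definition restr :: "'v set \<Rightarrow> ('v \<Rightarrow> 'v \<Rightarrow> nat) \<Rightarrow> 'v \<Rightarrow> 'v \<Rightarrow> nat" where
  "restr B E = (\<lambda>v w. if v \<in> B \<and> w \<in> B then E v w else 0)"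

lemma ball_eq2: "ball ((V,E),x) r = ((bset E x r, restr (bset E x r) E), x)"
  by (simp add: ball_eq restr_def)

lemma restr_agree:
  assumes "v \<in> bset E x k" "k < r"
  shows "restr (bset E x r) E v w = E v w \<and> restr (bset E x r) E w v = E w v"
proof -
  have vB: "v \<in> bset E x r" using assms bset_mono[of k r E x] by auto
  have "E v w > 0 \<Longrightarrow> w \<in> bset E x r" "E w v > 0 \<Longrightarrow> w \<in> bset E x r"
    using bset_adj[OF assms(1), of w] bset_mono[of "Suc k" r E x] assms(2) unfolding adj_def by auto
  then show ?thesis using vB unfolding restr_def by auto
qed

lemma ball_bip_restrict:
  fixes E :: "'v \<Rightarrow> 'v \<Rightarrow> nat"
  shows "ball (bip (V,E), (x,b)) r = ball (bip (bset E x r, restr (bset E x r) E), (x,b)) r"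
proof -
  let ?B = "bset E x r" and ?R = "restr (bset E x r) E"
  have ag: "\<forall>k<r. \<forall>v\<in>bset (bipE E) (x,b) k. \<forall>w. bipE E v w = bipE ?R v w \<and> bipE E w v = bipE ?R w v"
  proof (intro allI impI ballI)
    fix k and v w :: "'v \<times> bool" assume k: "k < r" and v: "v \<in> bset (bipE E) (x,b) k"
    obtain v0 c where vv: "v = (v0,c)" by (cases v)
    obtain w0 d where ww: "w = (w0,d)" by (cases w)
    have "v0 \<in> bset E x k" using v vv bip_bset_sub[of E x b k] by auto
    note ra = restr_agree[OF this k, of w0]
    show "bipE E v w = bipE ?R v w \<and> bipE E w v = bipE ?R w v"
      using ra unfolding vv ww bipE_def by simp
  qed
  have bs: "bset (bipE E) (x,b) r = bset (bipE ?R) (x,b) r"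
    using bset_agree[OF ag order_refl] .
  have ev: "\<forall>v\<in>bset (bipE E) (x,b) r. \<forall>w\<in>bset (bipE E) (x,b) r. bipE E v w = bipE ?R v w"
  proof (intro ballI)
    fix v w assume v: "v \<in> bset (bipE E) (x,b) r" and w: "w \<in> bset (bipE E) (x,b) r"
    obtain v0 c where vv: "v = (v0,c)" by (cases v)
    obtain w0 d where ww: "w = (w0,d)" by (cases w)
    have "v0 \<in> ?B" "w0 \<in> ?B" using v w vv ww bip_bset_sub[of E x b r] by auto
    then show "bipE E v w = bipE ?R v w" unfolding vv ww bipE_def restr_def by simp
  qed
  show ?thesis
    unfolding bip_eq fst_conv snd_conv ball_eq bs[symmetric]
    using ev by (intro arg_cong2[where f=Pair] refl ext) auto
qed

lemma ball_bip_iso: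
  assumes "rooted_iso (ball ((V,E),x) r) (ball ((V',E'),x') r)"
  shows "rooted_iso (ball (bip (V,E), (x,b)) r) (ball (bip (V',E'), (x',b)) r)"
proof -
  let ?B = "bset E x r" and ?R = "restr (bset E x r) E"
  let ?B' = "bset E' x' r" and ?R' = "restr (bset E' x' r) E'"
  obtain f where f1: "bij_betw f ?B ?B'" and f2: "f x = x'"
    and f3: "\<forall>v\<in>?B. \<forall>w\<in>?B. ?R' (f v) (f w) = ?R v w"
    using rooted_iso_D[OF assms] unfolding ball_eq2 fst_conv snd_conv by metis
  let ?F = "map_prod f (id :: bool \<Rightarrow> bool)"
  have bF: "bij_betw ?F (?B \<times> UNIV) (?B' \<times> UNIV)"
    using bij_betw_map_prod[OF f1 bij_betw_id] .
  have s1: "\<forall>v w. bipE ?R v w > 0 \<longrightarrow> v \<in> ?B \<times> UNIV \<and> w \<in> ?B \<times> UNIV"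
  proof (intro allI impI)
    fix v w assume "bipE ?R v w > 0"
    then show "v \<in> ?B \<times> UNIV \<and> w \<in> ?B \<times> UNIV"
      unfolding bipE_def restr_def by (auto simp: mem_Times_iff split: if_splits)
  qed
  have s2: "\<forall>v w. bipE ?R' v w > 0 \<longrightarrow> v \<in> ?B' \<times> UNIV \<and> w \<in> ?B' \<times> UNIV"
  proof (intro allI impI)
    fix v w assume "bipE ?R' v w > 0"
    then show "v \<in> ?B' \<times> UNIV \<and> w \<in> ?B' \<times> UNIV"
      unfolding bipE_def restr_def by (auto simp: mem_Times_iff split: if_splits)
  qed
  have p: "\<forall>v\<in>?B \<times> UNIV. \<forall>w\<in>?B \<times> UNIV. bipE ?R' (?F v) (?F w) = bipE ?R v w"
  proof (intro ballI)
    fix v w assume v: "v \<in> ?B \<times> (UNIV::bool set)" and w: "w \<in> ?B \<times> (UNIV::bool set)"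
    obtain v0 c where vv: "v = (v0,c)" by (cases v)
    obtain w0 d where ww: "w = (w0,d)" by (cases w)
    have "v0 \<in> ?B" "w0 \<in> ?B" using v w vv ww by auto
    then have "?R' (f v0) (f w0) = ?R v0 w0" "?R' (f w0) (f v0) = ?R w0 v0" using f3 by auto
    then show "bipE ?R' (?F v) (?F w) = bipE ?R v w" unfolding vv ww bipE_def by simp
  qed
  have xB: "(x,b) \<in> ?B \<times> UNIV" using bset_root by auto
  have "rooted_iso (ball ((?B \<times> UNIV, bipE ?R),(x,b)) r) (ball ((?B' \<times> UNIV, bipE ?R'),?F (x,b)) r)"
    using iso_ball[OF bF s1 s2 p xB] .
  then show ?thesis
    unfolding ball_bip_restrict[of V E x b r] ball_bip_restrict[of V' E' x' b r]
    unfolding bip_eq fst_conv snd_conv using f2 by simp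
qed

definition tab :: "nat \<Rightarrow> nat list \<Rightarrow> nat \<Rightarrow> nat rgraph" where
  "tab k xs r0 = (({0..<k}, \<lambda>i j. if i < k \<and> j < k then xs ! (i * k + j) else 0), r0)"

definition dec :: "nat \<Rightarrow> nat rgraph" where
  "dec m = (case (from_nat m :: nat \<times> nat list \<times> nat) of (k, xs, r0) \<Rightarrow>
      if r0 < k then tab k xs r0 else tab 1 [0] 0)"

lemma tab_finite: "r0 < k \<Longrightarrow> finite_rgraph (tab k xs r0)"
  unfolding finite_rgraph_def wf_graph_def tab_def by (auto split: if_splits)

lemma dec_finite: "finite_rgraph (dec m)"
  unfolding dec_def by (auto split: prod.splits intro: tab_finite)

lemma dec_cover:
  fixes E :: "'v \<Rightarrow> 'v \<Rightarrow> nat"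
  assumes fin: "finite B" and x: "x \<in> B"
  shows "\<exists>m. rooted_iso ((B,E),x) (dec m)"
proof -
  define k where "k = card B"
  obtain h where h: "bij_betw h B {0..<k}" using ex_bij_betw_finite_nat[OF fin] unfolding k_def by blast
  have kpos: "k > 0" using fin x unfolding k_def by (auto simp: card_gt_0_iff)
  define hi where "hi = inv_into B h"
  define xs where "xs = map (\<lambda>m. E (hi (m div k)) (hi (m mod k))) [0..<k*k]"
  have hx: "h x < k" using h x bij_betwE by fastforce
  have d: "dec (to_nat (k, xs, h x)) = tab k xs (h x)" unfolding dec_def using hx by simp
  have hv: "\<And>v. v \<in> B \<Longrightarrow> h v < k" using h bij_betwE by fastforce
  have hiv: "\<And>v. v \<in> B \<Longrightarrow> hi (h v) = v" unfolding hi_def using h by (simp add: bij_betw_def)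
  have idx: "i * k + j < k * k" if "i < k" "j < k" for i j :: nat
  proof -
    have "i * k + j < i * k + k" using that by simp
    also have "\<dots> = (i + 1) * k" by simp
    also have "\<dots> \<le> k * k" using that by (intro mult_right_mono) auto
    finally show ?thesis .
  qed
  have pr: "\<forall>v\<in>B. \<forall>w\<in>B. snd (fst (tab k xs (h x))) (h v) (h w) = E v w"
  proof (intro ballI)
    fix v w assume v: "v \<in> B" and w: "w \<in> B"
    have a: "h v < k" "h w < k" using hv v w by auto
    have "xs ! (h v * k + h w) = E (hi ((h v * k + h w) div k)) (hi ((h v * k + h w) mod k))"
      unfolding xs_def using idx[OF a] by simp
    also have "(h v * k + h w) div k = h v" using a kpos by simp
    also have "(h v * k + h w) mod k = h w" using a kpos by simp
    finally show "snd (fst (tab k xs (h x))) (h v) (h w) = E v w"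
      unfolding tab_def using a hiv v w by simp
  qed
  have "rooted_iso ((B,E),x) (tab k xs (h x))"
    by (rule rooted_isoI[of h]) (use h pr x in \<open>auto simp: tab_def\<close>)
  then show ?thesis using d by metis
qed

lemma bset_finite:
  assumes wf: "wf_graph (V,E)" and lf: "locally_finite (V,E)" and x: "x \<in> V"
  shows "finite (bset E x k) \<and> bset E x k \<subseteq> V"
proof (induction k)
  case 0 then show ?case using x by simp
next
  case (Suc k)
  have adjV: "\<And>v w. adj E v w \<Longrightarrow> w \<in> V" using wf unfolding wf_graph_def adj_def by auto
  have "{w. \<exists>v\<in>bset E x k. adj E v w} = (\<Union>v\<in>bset E x k. {w. adj E v w})" by auto
  moreover have "finite (\<Union>v\<in>bset E x k. {w. adj E v w})"
    using Suc lf unfolding locally_finite_def by auto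
  moreover have "{w. \<exists>v\<in>bset E x k. adj E v w} \<subseteq> V" using adjV by auto
  ultimately show ?case using Suc by auto
qed

definition L1 :: "nat graph" where "L1 = ({0}, \<lambda>v w. if v = 0 \<and> w = 0 then 1 else 0)"
definition C2 :: "nat graph" where
  "C2 = ({0,1}, \<lambda>v w. if (v = 0 \<and> w = 1) \<or> (v = 1 \<and> w = 0) then 1 else 0)"
definition Kr :: "nat \<Rightarrow> nat rgraph" where
  "Kr r = (if r = 0 then (({0}, \<lambda>_ _. 0), 0) else (C2, 0))"

lemma edge_ball:
  assumes a1: "\<forall>w. adj E x w \<longleftrightarrow> w = y" and a2: "\<forall>w. adj E y w \<longleftrightarrow> w = x"
    and xy: "x \<noteq> y" and e1: "E x y = 1" and e2: "E y x = 1"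
  shows "rooted_iso (ball ((V,E),x) r) (Kr r)"
proof -
  have bs: "bset E x k = (if k = 0 then {x} else {x,y})" for k
  proof (induction k)
    case 0 then show ?case by simp
  next
    case (Suc k)
    show ?case
    proof (cases "k = 0")
      case True
      then show ?thesis using a1 by auto
    next
      case False
      then have "bset E x (Suc k) = {x,y} \<union> {w. adj E x w \<or> adj E y w}" using Suc by auto
      then show ?thesis using a1 a2 by auto
    qed
  qed
  have exx: "E x x = 0" using a1 xy unfolding adj_def by auto
  have eyy: "E y y = 0" using a2 xy unfolding adj_def by auto
  show ?thesis
  proof (cases "r = 0")
    case True
    show ?thesis unfolding ball_eq Kr_def using True bs[of 0]
      by (intro rooted_isoI[of "\<lambda>_. 0"]) (auto simp: exx bij_betw_def)
  next
    case False
    define f where "f v = (if v = x then 0 else 1::nat)" for v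
    have bj: "bij_betw f {x,y} {0,1}" unfolding f_def bij_betw_def inj_on_def using xy by auto
    show ?thesis unfolding ball_eq Kr_def C2_def using False bs[of r] xy
      apply (intro rooted_isoI[of f])
      subgoal using bj by simp
      by (auto simp: f_def exx eyy e1 e2)
  qed
qed

lemma bipE_L1: "bipE (snd L1) = (\<lambda>a b. if (a = (0,False) \<and> b = (0,True)) \<or> (a = (0,True) \<and> b = (0,False)) then 1 else 0)"
proof (intro ext)
  fix a b :: "nat \<times> bool"
  obtain x c where a: "a = (x,c)" by (cases a)
  obtain y d where b: "b = (y,d)" by (cases b)
  show "bipE (snd L1) a b = (if (a = (0,False) \<and> b = (0,True)) \<or> (a = (0,True) \<and> b = (0,False)) then 1 else 0)"
    unfolding a b by (cases c; cases d) (simp_all add: bipE_def L1_def)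
qed

lemma bipE_C2: "bipE (snd C2) = (\<lambda>a b. if (a = (0,False) \<and> b = (1,True)) \<or> (a = (1,True) \<and> b = (0,False))
     \<or> (a = (1,False) \<and> b = (0,True)) \<or> (a = (0,True) \<and> b = (1,False)) then 1 else 0)"
proof (intro ext)
  fix a b :: "nat \<times> bool"
  obtain x c where a: "a = (x,c)" by (cases a)
  obtain y d where b: "b = (y,d)" by (cases b)
  show "bipE (snd C2) a b = (if (a = (0,False) \<and> b = (1,True)) \<or> (a = (1,True) \<and> b = (0,False))
     \<or> (a = (1,False) \<and> b = (0,True)) \<or> (a = (0,True) \<and> b = (1,False)) then 1 else 0)"
    unfolding a b by (cases c; cases d) (auto simp add: bipE_def C2_def)
qed

lemma L1_adj:
  fixes E :: "nat \<times> bool \<Rightarrow> nat \<times> bool \<Rightarrow> nat"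
  assumes "E = (\<lambda>a b. if a = (0, False) \<and> b = (0, True) \<or> a = (0, True) \<and> b = (0, False) then 1 else 0)"
  shows "\<forall>w. adj E (0,c) w \<longleftrightarrow> w = (0, \<not>c)"
  unfolding assms adj_def by (cases c) auto

lemma bip_L1_ball: "v \<in> fst (bip L1) \<Longrightarrow> rooted_iso (ball (bip L1, v) r) (Kr r)"
proof -
  assume "v \<in> fst (bip L1)"
  then obtain b where v: "v = (0,b)" unfolding bip_eq L1_def by auto
  show ?thesis unfolding v bip_eq fst_conv snd_conv bipE_L1
    apply (rule edge_ball[where y="(0,\<not>b)"])
    apply (rule L1_adj, rule refl)
    using L1_adj[OF refl, of "\<not>b"] apply simp
    by auto
qed

lemma C2b_adj:
  fixes E :: "nat \<times> bool \<Rightarrow> nat \<times> bool \<Rightarrow> nat"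
  assumes "E = (\<lambda>a b. if (a = (0,False) \<and> b = (1,True)) \<or> (a = (1,True) \<and> b = (0,False))
     \<or> (a = (1,False) \<and> b = (0,True)) \<or> (a = (0,True) \<and> b = (1,False)) then 1 else 0)"
    and "x = 0 \<or> x = 1"
  shows "\<forall>w. adj E (x,c) w \<longleftrightarrow> w = (1 - x, \<not>c)"
  using assms(2) unfolding assms(1) adj_def
  apply (elim disjE)
  subgoal by (cases c) auto
  subgoal by (cases c) auto
  done

lemma bip_C2_ball: "v \<in> fst (bip C2) \<Longrightarrow> rooted_iso (ball (bip C2, v) r) (Kr r)"
proof -
  assume "v \<in> fst (bip C2)"
  then obtain x b where v: "v = (x,b)" and x: "x = 0 \<or> x = 1" unfolding bip_eq C2_def by auto
  have x': "1 - x = 0 \<or> 1 - x = 1" using x by auto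
  have xx: "1 - (1 - x) = x" using x by auto
  show ?thesis unfolding v bip_eq fst_conv snd_conv bipE_C2
    apply (rule edge_ball[where y="(1 - x,\<not>b)"])
    apply (rule C2b_adj[OF refl x])
    using C2b_adj[OF refl x', of "\<not>b"] xx apply simp
    using x by auto
qed

lemma C2_adj0: "\<forall>w. adj (snd C2) 0 w \<longleftrightarrow> w = 1"
  unfolding C2_def adj_def by auto
lemma C2_adj1: "\<forall>w. adj (snd C2) 1 w \<longleftrightarrow> w = 0"
  unfolding C2_def adj_def by auto

lemma C2_ball: "v \<in> fst C2 \<Longrightarrow> rooted_iso (ball (C2, v) r) (Kr r)"
proof -
  assume "v \<in> fst C2"
  then have x: "v = 0 \<or> v = 1" unfolding C2_def by auto
  have e: "snd C2 0 1 = 1" "snd C2 1 0 = 1" unfolding C2_def by auto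
  have "rooted_iso (ball ((fst C2, snd C2), v) r) (Kr r)"
    using x
  proof
    assume "v = 0"
    then show ?thesis using edge_ball[OF C2_adj0 C2_adj1 _ e, of "fst C2" r] by simp
  next
    assume "v = 1"
    then show ?thesis using edge_ball[OF C2_adj1 C2_adj0 _ e(2) e(1), of "fst C2" r] by simp
  qed
  then show ?thesis unfolding prod.collapse .
qed

lemma fu_conv:
  fixes P :: "nat \<Rightarrow> 'a pmf" and M :: "'a measure" and A :: "nat \<Rightarrow> 'a set"
  assumes pM: "prob_space M"
  and meas: "\<forall>i. A i \<inter> space M \<in> sets M"
  and conv: "\<forall>i. (\<lambda>n. measure_pmf.prob (P n) (A i)) \<longlonglongrightarrow> measure M (A i \<inter> space M)"
  and disj: "\<forall>i j. A i \<inter> A j = {} \<or> A i = A j"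
  and F: "finite F"
  shows "(\<lambda>n. measure_pmf.prob (P n) (\<Union>i\<in>F. A i)) \<longlonglongrightarrow> measure M ((\<Union>i\<in>F. A i) \<inter> space M)"
  using F
proof (induction F rule: finite_induct)
  case empty then show ?case by simp
next
  case (insert i F)
  interpret prob_space M by (rule pM)
  show ?case
  proof (cases "\<exists>j\<in>F. A i = A j")
    case True
    then have "(\<Union>i\<in>insert i F. A i) = (\<Union>i\<in>F. A i)" by auto
    then show ?thesis using insert by simp
  next
    case False
    then have dj: "A i \<inter> (\<Union>i\<in>F. A i) = {}" using disj by blast
    have mU: "(\<Union>i\<in>F. A i) \<inter> space M \<in> sets M"
    proof -
      have "(\<Union>i\<in>F. A i) \<inter> space M = (\<Union>i\<in>F. A i \<inter> space M)" by auto
      then show ?thesis using meas insert(1) by (metis sets.finite_UN)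
    qed
    have e1: "measure_pmf.prob (P n) (\<Union>i\<in>insert i F. A i) =
        measure_pmf.prob (P n) (A i) + measure_pmf.prob (P n) (\<Union>i\<in>F. A i)" for n
      using dj by (simp add: measure_pmf.finite_measure_Union)
    have e2: "measure M ((\<Union>i\<in>insert i F. A i) \<inter> space M) =
        measure M (A i \<inter> space M) + measure M ((\<Union>i\<in>F. A i) \<inter> space M)"
    proof -
      have "(\<Union>i\<in>insert i F. A i) \<inter> space M = (A i \<inter> space M) \<union> ((\<Union>i\<in>F. A i) \<inter> space M)" by auto
      moreover have "(A i \<inter> space M) \<inter> ((\<Union>i\<in>F. A i) \<inter> space M) = {}" using dj by auto
      ultimately show ?thesis using meas mU finite_measure_Union by simp
    qed
    show ?thesis unfolding e1 e2 using conv insert(3) by (intro tendsto_add) auto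
  qed
qed

lemma abstract_conv:
  fixes P :: "nat \<Rightarrow> 'a pmf" and M :: "'a measure" and A :: "nat \<Rightarrow> 'a set" and B :: "'a set"
  assumes pM: "prob_space M"
  and meas: "\<forall>i. A i \<inter> space M \<in> sets M"
  and conv: "\<forall>i. (\<lambda>n. measure_pmf.prob (P n) (A i)) \<longlonglongrightarrow> measure M (A i \<inter> space M)"
  and disj: "\<forall>i j. A i \<inter> A j = {} \<or> A i = A j"
  and sep: "\<forall>i. A i \<subseteq> B \<or> A i \<inter> B = {}"
  and cover: "space M \<subseteq> (\<Union>i. A i)"
  shows "(\<lambda>n. measure_pmf.prob (P n) B) \<longlonglongrightarrow> measure M (B \<inter> space M)"
proof -
  interpret prob_space M by (rule pM)
  define S where "S k = (\<Union>i\<in>{..<k}. A i) \<inter> space M" for k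
  have Sm: "S k \<in> sets M" for k
  proof -
    have "S k = (\<Union>i\<in>{..<k}. A i \<inter> space M)" unfolding S_def by auto
    then show ?thesis using meas by (metis finite_lessThan sets.finite_UN)
  qed
  have "incseq S" unfolding S_def incseq_def by (auto, meson less_le_trans lessThan_iff)
  moreover have "(\<Union>k. S k) = space M"
  proof
    show "(\<Union>k. S k) \<subseteq> space M" unfolding S_def by auto
    show "space M \<subseteq> (\<Union>k. S k)"
    proof
      fix x assume x: "x \<in> space M"
      then obtain i where "x \<in> A i" using cover by blast
      then have "x \<in> S (Suc i)" unfolding S_def using x by auto
      then show "x \<in> (\<Union>k. S k)" by blast
    qed
  qed
  ultimately have lim: "(\<lambda>k. measure M (S k)) \<longlonglongrightarrow> 1"
    using finite_Lim_measure_incseq[of S] Sm prob_space by auto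
  have Bm: "B \<inter> space M \<in> sets M"
  proof -
    have "B \<inter> space M = (\<Union>i. if A i \<subseteq> B then A i \<inter> space M else {})"
    proof
      show "B \<inter> space M \<subseteq> (\<Union>i. if A i \<subseteq> B then A i \<inter> space M else {})"
      proof
        fix x assume x: "x \<in> B \<inter> space M"
        then obtain i where i: "x \<in> A i" using cover by blast
        then have "A i \<subseteq> B" using sep x by blast
        then show "x \<in> (\<Union>i. if A i \<subseteq> B then A i \<inter> space M else {})" using i x by auto
      qed
    qed (auto split: if_splits)
    moreover have "(\<Union>i. if A i \<subseteq> B then A i \<inter> space M else {}) \<in> sets M"
      using meas by (intro sets.countable_UN) auto
    ultimately show ?thesis by simp
  qed
  show ?thesis
    unfolding tendsto_iff
  proof (intro allI impI)
    fix e :: real assume e: "e > 0"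
    have "eventually (\<lambda>k. measure M (S k) > 1 - e/2) sequentially"
      using lim e by (intro order_tendstoD(1)) auto
    then obtain k where k: "measure M (S k) > 1 - e/2" by (metis eventually_sequentially order_refl)
    define F1 where "F1 = {i\<in>{..<k}. A i \<subseteq> B}"
    define F2 where "F2 = {i\<in>{..<k}. \<not> A i \<subseteq> B}"
    have fin: "finite F1" "finite F2" unfolding F1_def F2_def by auto
    have U1m: "(\<Union>i\<in>F1. A i) \<inter> space M \<in> sets M"
    proof -
      have "(\<Union>i\<in>F1. A i) \<inter> space M = (\<Union>i\<in>F1. A i \<inter> space M)" by auto
      then show ?thesis using meas fin by (metis sets.finite_UN)
    qed
    have U2m: "(\<Union>i\<in>F2. A i) \<inter> space M \<in> sets M"
    proof -
      have "(\<Union>i\<in>F2. A i) \<inter> space M = (\<Union>i\<in>F2. A i \<inter> space M)" by auto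
      then show ?thesis using meas fin by (metis sets.finite_UN)
    qed
    have compl: "measure M (space M - S k) < e/2"
      using prob_compl[OF Sm[of k]] k by simp
    have "B \<inter> space M \<subseteq> ((\<Union>i\<in>F1. A i) \<inter> space M) \<union> (space M - S k)"
    proof
      fix x assume x: "x \<in> B \<inter> space M"
      show "x \<in> ((\<Union>i\<in>F1. A i) \<inter> space M) \<union> (space M - S k)"
      proof (cases "x \<in> S k")
        case True
        then obtain i where i: "i < k" "x \<in> A i" unfolding S_def by auto
        then have "A i \<subseteq> B" using sep x by blast
        then show ?thesis using i x unfolding F1_def by auto
      qed (use x in auto)
    qed
    then have "measure M (B \<inter> space M) \<le> measure M (((\<Union>i\<in>F1. A i) \<inter> space M) \<union> (space M - S k))"
      using U1m Sm Bm by (intro finite_measure_mono) auto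
    also have "\<dots> \<le> measure M ((\<Union>i\<in>F1. A i) \<inter> space M) + measure M (space M - S k)"
      using U1m Sm by (intro measure_subadditive) auto
    finally have L1: "measure M ((\<Union>i\<in>F1. A i) \<inter> space M) > measure M (B \<inter> space M) - e/2"
      using compl by linarith
    have "space M - B \<subseteq> ((\<Union>i\<in>F2. A i) \<inter> space M) \<union> (space M - S k)"
    proof
      fix x assume x: "x \<in> space M - B"
      show "x \<in> ((\<Union>i\<in>F2. A i) \<inter> space M) \<union> (space M - S k)"
      proof (cases "x \<in> S k")
        case True
        then obtain i where i: "i < k" "x \<in> A i" unfolding S_def by auto
        then have "\<not> A i \<subseteq> B" using x by blast
        then show ?thesis using i x unfolding F2_def by auto
      qed (use x in auto)
    qed
    then have "measure M (space M - B) \<le> measure M (((\<Union>i\<in>F2. A i) \<inter> space M) \<union> (space M - S k))"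
      using U2m Sm Bm by (intro finite_measure_mono) auto
    also have "\<dots> \<le> measure M ((\<Union>i\<in>F2. A i) \<inter> space M) + measure M (space M - S k)"
      using U2m Sm by (intro measure_subadditive) auto
    finally have "measure M ((\<Union>i\<in>F2. A i) \<inter> space M) > measure M (space M - B) - e/2"
      using compl by linarith
    moreover have "space M - B = space M - (B \<inter> space M)" by auto
    ultimately have L2: "measure M ((\<Union>i\<in>F2. A i) \<inter> space M) > 1 - measure M (B \<inter> space M) - e/2"
      using prob_compl[OF Bm] by simp
    have ev1: "eventually (\<lambda>n. measure_pmf.prob (P n) (\<Union>i\<in>F1. A i) > measure M (B \<inter> space M) - e) sequentially"
      using fu_conv[OF pM meas conv disj fin(1)] L1 e by (intro order_tendstoD(1)) auto
    have ev2: "eventually (\<lambda>n. measure_pmf.prob (P n) (\<Union>i\<in>F2. A i) > 1 - measure M (B \<inter> space M) - e) sequentially"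
      using fu_conv[OF pM meas conv disj fin(2)] L2 e by (intro order_tendstoD(1)) auto
    show "eventually (\<lambda>n. dist (measure_pmf.prob (P n) B) (measure M (B \<inter> space M)) < e) sequentially"
      using ev1 ev2
    proof eventually_elim
      case (elim n)
      have s1: "(\<Union>i\<in>F1. A i) \<subseteq> B" unfolding F1_def by auto
      have s2: "(\<Union>i\<in>F2. A i) \<inter> B = {}" using sep unfolding F2_def by blast
      have "measure_pmf.prob (P n) (\<Union>i\<in>F1. A i) \<le> measure_pmf.prob (P n) B"
        using s1 by (simp add: measure_pmf.finite_measure_mono)
      moreover have "measure_pmf.prob (P n) B + measure_pmf.prob (P n) (\<Union>i\<in>F2. A i) \<le> 1"
      proof -
        have "measure_pmf.prob (P n) B + measure_pmf.prob (P n) (\<Union>i\<in>F2. A i) =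
              measure_pmf.prob (P n) (B \<union> (\<Union>i\<in>F2. A i))"
          using s2 by (subst measure_pmf.finite_measure_Union) auto
        then show ?thesis using measure_pmf.prob_le_1 by simp
      qed
      ultimately show ?case using elim by (simp add: dist_real_def abs_less_iff)
    qed
  qed
qed

lemma prob_bind_pmf:
  "measure_pmf.prob (bind_pmf N f) S = (\<integral>G. measure_pmf.prob (f G) S \<partial>measure_pmf N)"
proof -
  have int: "integrable (measure_pmf N) (\<lambda>G. measure_pmf.prob (f G) S)"
    by (rule measure_pmf.integrable_const_bound[where B=1]) auto
  have "emeasure (measure_pmf (bind_pmf N f)) S = (\<integral>\<^sup>+G. emeasure (measure_pmf (f G)) S \<partial>measure_pmf N)"
    by simp
  also have "\<dots> = (\<integral>\<^sup>+G. ennreal (measure_pmf.prob (f G) S) \<partial>measure_pmf N)"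
    by (simp add: measure_pmf.emeasure_eq_measure)
  also have "\<dots> = ennreal (\<integral>G. measure_pmf.prob (f G) S \<partial>measure_pmf N)"
    using int by (intro nn_integral_eq_integral) auto
  finally show ?thesis
    by (simp add: measure_pmf.emeasure_eq_measure)
qed

lemma fst_bip: "fst (bip G) = fst G \<times> UNIV" by (simp add: bip_def)

lemma prob_rooted_unif_bip:
  fixes N :: "'v graph pmf"
  assumes "finite_random_graph N"
  shows "measure_pmf.prob (rooted_unif (map_pmf bip N)) S =
     (measure_pmf.prob (rooted_unif N) {g. (bip (fst g), (snd g, False)) \<in> S}
    + measure_pmf.prob (rooted_unif N) {g. (bip (fst g), (snd g, True)) \<in> S}) / 2"
proof -
  define f where "f b G = measure_pmf.prob (map_pmf (\<lambda>v. (G, v)) (pmf_of_set (fst G))) {g. (bip (fst g), (snd g, b)) \<in> S}" for b G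
  have int: "integrable (measure_pmf N) (f b)" for b
    unfolding f_def by (rule measure_pmf.integrable_const_bound[where B=1]) auto
  have "measure_pmf.prob (rooted_unif (map_pmf bip N)) S =
     (\<integral>G. measure_pmf.prob (map_pmf (\<lambda>v. (bip G, v)) (pmf_of_set (fst (bip G)))) S \<partial>measure_pmf N)"
    unfolding rooted_unif_def bind_map_pmf prob_bind_pmf by simp
  also have "\<dots> = (\<integral>G. (f False G + f True G) / 2 \<partial>measure_pmf N)"
  proof (rule integral_cong_AE)
    show "AE G in measure_pmf N. measure_pmf.prob (map_pmf (\<lambda>v. (bip G, v)) (pmf_of_set (fst (bip G)))) S = (f False G + f True G) / 2"
      using AE_measure_pmf[of N]
    proof eventually_elim
      case (elim G)
      then have fin: "finite (fst G)" and ne: "fst G \<noteq> {}" using assms unfolding finite_random_graph_def by auto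
      define X where "X b = {v \<in> fst G. (bip G, (v, b)) \<in> S}" for b
      have finX: "finite (X b)" for b unfolding X_def using fin by auto
      have fb: "f b G = card (X b) / card (fst G)" for b
        unfolding f_def measure_map_pmf using fin ne
        by (subst measure_pmf_of_set) (auto simp: X_def Int_def vimage_def)
      have "fst (bip G) \<inter> ((\<lambda>v. (bip G, v)) -` S) = X False \<times> {False} \<union> X True \<times> {True}"
      proof (rule set_eqI)
        fix p :: "'v \<times> bool"
        obtain v c where p: "p = (v,c)" by (cases p)
        show "p \<in> fst (bip G) \<inter> ((\<lambda>v. (bip G, v)) -` S) \<longleftrightarrow> p \<in> X False \<times> {False} \<union> X True \<times> {True}"
          unfolding X_def fst_bip p by (cases c) auto
      qed
      moreover have "card (X False \<times> {False} \<union> X True \<times> {True}) = card (X False) + card (X True)"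
        using finX by (subst card_Un_disjoint) (auto simp: card_cartesian_product)
      moreover have "card (fst (bip G)) = 2 * card (fst G)"
        unfolding fst_bip by (simp add: card_cartesian_product)
      moreover have "fst (bip G) \<noteq> {}" "finite (fst (bip G))" using fin ne unfolding fst_bip by auto
      ultimately show ?case unfolding measure_map_pmf fb
        by (subst measure_pmf_of_set) (auto simp: add_divide_distrib)
    qed
  qed auto
  also have "\<dots> = ((\<integral>G. f False G \<partial>measure_pmf N) + (\<integral>G. f True G \<partial>measure_pmf N)) / 2"
    using int by simp
  also have "\<dots> = (measure_pmf.prob (rooted_unif N) {g. (bip (fst g), (snd g, False)) \<in> S}
    + measure_pmf.prob (rooted_unif N) {g. (bip (fst g), (snd g, True)) \<in> S}) / 2"
    unfolding rooted_unif_def prob_bind_pmf f_def by simp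
  finally show ?thesis .
qed

definition Mg :: "nat rgraph \<Rightarrow> nat rgraph measure" where
  "Mg g0 = return (count_space {g0}) g0"

lemma Mg_prob: "measure (Mg g0) {g \<in> space (Mg g0). P g} = (if P g0 then 1 else 0)"
proof -
  have "{g \<in> space (Mg g0). P g} = (if P g0 then {g0} else {})" unfolding Mg_def by auto
  then show ?thesis unfolding Mg_def by (simp add: measure_return)
qed

lemma Mg_random:
  assumes "wf_graph (fst g0)" "locally_finite (fst g0)" "connected_rooted g0"
  shows "random_rooted_graph (Mg g0)"
  unfolding random_rooted_graph_def Mg_def
  using assms by (auto intro!: prob_space_return)

lemma prob_return_unif:
  assumes fin: "finite (fst G)" and ne: "fst G \<noteq> {}" and eq: "\<forall>v\<in>fst G. P (G,v) = Q"
  shows "measure_pmf.prob (rooted_unif (return_pmf G)) {g. P g} = (if Q then 1 else 0)"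
proof -
  have "measure_pmf.prob (rooted_unif (return_pmf G)) {g. P g} =
        measure_pmf.prob (pmf_of_set (fst G)) {v. P (G,v)}"
    unfolding rooted_unif_def bind_return_pmf measure_map_pmf by (simp add: vimage_def)
  also have "\<dots> = card (fst G \<inter> {v. P (G,v)}) / card (fst G)"
    using fin ne by (subst measure_pmf_of_set) auto
  also have "\<dots> = (if Q then 1 else 0)"
  proof (cases Q)
    case True
    then have "fst G \<inter> {v. P (G,v)} = fst G" using eq by auto
    then show ?thesis using True fin ne by simp
  next
    case False
    then have "fst G \<inter> {v. P (G,v)} = {}" using eq by auto
    then show ?thesis using False by simp
  qed
  finally show ?thesis .
qed

lemma L1_ok: "wf_graph L1" "locally_finite L1" "connected_rooted (L1, 0)"
proof -
  show w: "wf_graph L1" unfolding wf_graph_def L1_def by auto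
  show l: "locally_finite L1" unfolding locally_finite_def L1_def adj_def by auto
  have "bset (snd L1) 0 k \<subseteq> fst L1" for k
    using bset_finite[of "fst L1" "snd L1" 0 k] w l by (auto simp: L1_def)
  moreover have "fst L1 \<subseteq> bset (snd L1) 0 0" by (simp add: L1_def)
  ultimately have "fst L1 = (\<Union>r. bset (snd L1) 0 r)" by blast
  moreover have "0 \<in> fst L1" by (simp add: L1_def)
  ultimately show "connected_rooted (L1, 0)" unfolding connected_rooted_def fst_conv snd_conv by blast
qed

lemma C2_ok: "wf_graph C2" "locally_finite C2" "connected_rooted (C2, 0)"
proof -
  show w: "wf_graph C2" unfolding wf_graph_def C2_def by auto
  have "{w. adj (snd C2) v w} \<subseteq> {0,1}" for v unfolding C2_def adj_def by auto
  then show l: "locally_finite C2" unfolding locally_finite_def by (meson finite.emptyI finite.insertI finite_subset)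
  have "bset (snd C2) 0 k \<subseteq> fst C2" for k
    using bset_finite[of "fst C2" "snd C2" 0 k] w l by (auto simp: C2_def)
  moreover have "fst C2 \<subseteq> bset (snd C2) 0 1" by (auto simp: C2_def adj_def)
  ultimately have "fst C2 = (\<Union>r. bset (snd C2) 0 r)" by blast
  moreover have "0 \<in> fst C2" by (simp add: C2_def)
  ultimately show "connected_rooted (C2, 0)" unfolding connected_rooted_def fst_conv snd_conv by blast
qed

lemma L1_frg: "finite_random_graph (return_pmf L1)"
  unfolding finite_random_graph_def using L1_ok by (auto simp: L1_def)
lemma C2_frg: "finite_random_graph (return_pmf C2)"
  unfolding finite_random_graph_def using C2_ok by (auto simp: C2_def)

lemma iso_Kr_eq: "rooted_iso g (Kr r) \<Longrightarrow> rooted_iso g H = rooted_iso (Kr r) H"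
  using rooted_iso_sym rooted_iso_trans by metis

lemma bip_prob:
  assumes "G = L1 \<or> G = C2"
  shows "measure_pmf.prob (rooted_unif (map_pmf bip (return_pmf G))) {g. rooted_iso (ball g r) H}
     = (if rooted_iso (Kr r) H then 1 else 0)"
proof -
  have "\<forall>v\<in>fst (bip G). rooted_iso (ball (bip G, v) r) H = rooted_iso (Kr r) H"
  proof
    fix v assume v: "v \<in> fst (bip G)"
    have "rooted_iso (ball (bip G, v) r) (Kr r)"
      using assms bip_L1_ball[OF _] bip_C2_ball[OF _] v by blast
    then show "rooted_iso (ball (bip G, v) r) H = rooted_iso (Kr r) H" by (rule iso_Kr_eq)
  qed
  moreover have "finite (fst (bip G))" "fst (bip G) \<noteq> {}"
    using assms unfolding fst_bip by (auto simp: L1_def C2_def)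
  ultimately show ?thesis
    unfolding map_return_pmf by (intro prob_return_unif) auto
qed

lemma bip_Mg:
  assumes "g0 = (L1, 0) \<or> g0 = (C2, 0)"
  shows "bip_ball_prob (Mg g0) r H = (if rooted_iso (Kr r) H then 1 else 0)"
proof -
  have "rooted_iso (ball (bip (fst g0), (snd g0, b)) r) H = rooted_iso (Kr r) H" for b
  proof -
    have "(snd g0, b) \<in> fst (bip (fst g0))" using assms unfolding fst_bip by (auto simp: L1_def C2_def)
    then have "rooted_iso (ball (bip (fst g0), (snd g0, b)) r) (Kr r)"
      using assms bip_L1_ball bip_C2_ball by auto
    then show ?thesis by (rule iso_Kr_eq)
  qed
  then show ?thesis unfolding bip_ball_prob_def Mg_prob by simp
qed

lemma part1:
  fixes Gs :: "nat \<Rightarrow> 'v graph pmf" and M :: "'v rgraph measure"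
  assumes fr: "\<forall>n. finite_random_graph (Gs n)" and rr: "random_rooted_graph M"
    and lw: "lw_conv Gs (ball_prob M)"
  shows "lw_conv (\<lambda>n. map_pmf bip (Gs n)) (bip_ball_prob M)"
  unfolding lw_conv_def
proof (intro allI impI)
  fix r and H :: "nat rgraph" assume "finite_rgraph H"
  define A where "A i = {g :: 'v rgraph. rooted_iso (ball g r) (dec i)}" for i
  have key: "(\<lambda>n. measure_pmf.prob (rooted_unif (Gs n)) {g. rooted_iso (ball (bip (fst g), (snd g, b)) r) H})
      \<longlonglongrightarrow> measure M ({g. rooted_iso (ball (bip (fst g), (snd g, b)) r) H} \<inter> space M)" for b
  proof (rule abstract_conv[where A=A])
    show "prob_space M" using rr by (simp add: random_rooted_graph_def)
    show "\<forall>i. A i \<inter> space M \<in> sets M"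
    proof
      fix i
      have ma: "\<forall>r (H::nat rgraph). {g\<in>space M. rooted_iso (ball g r) H} \<in> sets M"
        using rr unfolding random_rooted_graph_def by blast
      have "A i \<inter> space M = {g\<in>space M. rooted_iso (ball g r) (dec i)}" unfolding A_def by auto
      then show "A i \<inter> space M \<in> sets M" using ma[rule_format, of r "dec i"] by simp
    qed
    show "\<forall>i. (\<lambda>n. measure_pmf.prob (rooted_unif (Gs n)) (A i)) \<longlonglongrightarrow> measure M (A i \<inter> space M)"
    proof
      fix i
      have "A i \<inter> space M = {g\<in>space M. rooted_iso (ball g r) (dec i)}" unfolding A_def by auto
      then show "(\<lambda>n. measure_pmf.prob (rooted_unif (Gs n)) (A i)) \<longlonglongrightarrow> measure M (A i \<inter> space M)"
      proof -
        have "\<forall>r (H::nat rgraph). finite_rgraph H \<longrightarrow> (\<lambda>n. measure_pmf.prob (rooted_unif (Gs n)) {g. rooted_iso (ball g r) H})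
           \<longlonglongrightarrow> measure M {g\<in>space M. rooted_iso (ball g r) H}"
          using lw unfolding lw_conv_def ball_prob_def by blast
        then have "(\<lambda>n. measure_pmf.prob (rooted_unif (Gs n)) {g. rooted_iso (ball g r) (dec i)})
           \<longlonglongrightarrow> measure M {g\<in>space M. rooted_iso (ball g r) (dec i)}"
          using dec_finite[of i] by blast
        then show ?thesis using \<open>A i \<inter> space M = _\<close> unfolding A_def by simp
      qed
    qed
    show "\<forall>i j. A i \<inter> A j = {} \<or> A i = A j"
    proof (intro allI)
      fix i j
      show "A i \<inter> A j = {} \<or> A i = A j"
      proof (cases "A i \<inter> A j = {}")
        case False
        then obtain g :: "'v rgraph" where "rooted_iso (ball g r) (dec i)" "rooted_iso (ball g r) (dec j)"
          unfolding A_def by blast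
        then have ij: "rooted_iso (dec i) (dec j)" and ji: "rooted_iso (dec j) (dec i)"
          using rooted_iso_sym rooted_iso_trans by metis+
        have "A i = A j"
        proof (intro set_eqI iffI)
          fix g' assume "g' \<in> A i"
          then have "rooted_iso (ball g' r) (dec i)" unfolding A_def by simp
          then show "g' \<in> A j" unfolding A_def using rooted_iso_trans[OF _ ij] by simp
        next
          fix g' assume "g' \<in> A j"
          then have "rooted_iso (ball g' r) (dec j)" unfolding A_def by simp
          then show "g' \<in> A i" unfolding A_def using rooted_iso_trans[OF _ ji] by simp
        qed
        then show ?thesis by simp
      qed simp
    qed
    let ?B = "{g. rooted_iso (ball (bip (fst g), (snd g, b)) r) H}"
    have bi: "rooted_iso (ball (bip (fst g), (snd g, b)) r) (ball (bip (fst g'), (snd g', b)) r)"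
      if "rooted_iso (ball g r) (ball g' r)" for g g' :: "'v rgraph"
    proof -
      obtain V E x where g: "g = ((V,E),x)" by (metis prod.collapse)
      obtain V' E' x' where g': "g' = ((V',E'),x')" by (metis prod.collapse)
      show ?thesis using ball_bip_iso[of V E x r V' E' x' b] that unfolding g g' by simp
    qed
    show "\<forall>i. A i \<subseteq> ?B \<or> A i \<inter> ?B = {}"
    proof
      fix i
      show "A i \<subseteq> ?B \<or> A i \<inter> ?B = {}"
      proof (cases "A i \<inter> ?B = {}")
        case False
        then obtain g :: "'v rgraph" where g1: "rooted_iso (ball g r) (dec i)" and g2: "rooted_iso (ball (bip (fst g), (snd g, b)) r) H"
          unfolding A_def by auto
        have "A i \<subseteq> ?B"
        proof
          fix g' assume "g' \<in> A i"
          then have "rooted_iso (ball g' r) (dec i)" unfolding A_def by simp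
          then have "rooted_iso (ball g' r) (ball g r)" using g1 rooted_iso_sym rooted_iso_trans by metis
          then have "rooted_iso (ball (bip (fst g'), (snd g', b)) r) (ball (bip (fst g), (snd g, b)) r)" by (rule bi)
          then show "g' \<in> ?B" using rooted_iso_trans[OF _ g2] by simp
        qed
        then show ?thesis by simp
      qed simp
    qed
    show "space M \<subseteq> (\<Union>i. A i)"
    proof
      fix g assume gM: "g \<in> space M"
      obtain V E x where g: "g = ((V,E),x)" by (metis prod.collapse)
      have wf: "wf_graph (V,E)" and lf: "locally_finite (V,E)" and x: "x \<in> V"
        using rr gM unfolding random_rooted_graph_def connected_rooted_def g by auto
      have fin: "finite (bset E x r)" using bset_finite[OF wf lf x] by simp
      obtain m where "rooted_iso ((bset E x r, restr (bset E x r) E), x) (dec m)"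
        using dec_cover[OF fin bset_root] by blast
      then have "g \<in> A m" unfolding A_def g by (simp add: ball_eq2)
      then show "g \<in> (\<Union>i. A i)" by blast
    qed
  qed
  have e: "{g \<in> space M. P g} = {g. P g} \<inter> space M" for P by auto
  show "(\<lambda>n. measure_pmf.prob (rooted_unif (map_pmf bip (Gs n))) {g. rooted_iso (ball g r) H}) \<longlonglongrightarrow> bip_ball_prob M r H"
    unfolding prob_rooted_unif_bip[OF fr[rule_format]] bip_ball_prob_def e
    using key[of False] key[of True] by (intro tendsto_divide tendsto_add) auto
qed

lemma L1_ball0: "rooted_iso (ball (L1, 0) 0) (L1, 0)"
  unfolding L1_def ball_eq by (rule rooted_isoI[of id]) auto

lemma C2_ball0: "v \<in> fst C2 \<Longrightarrow> \<not> rooted_iso (ball (C2, v) 0) (L1, 0)"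
proof
  assume v: "v \<in> fst C2" and iso: "rooted_iso (ball (C2, v) 0) (L1, 0)"
  obtain f where f2: "f (snd (ball (C2, v) 0)) = snd (L1, 0::nat)"
    and f3: "\<forall>a\<in>fst (fst (ball (C2, v) 0)). \<forall>b\<in>fst (fst (ball (C2, v) 0)).
       snd (fst (L1, 0::nat)) (f a) (f b) = snd (fst (ball (C2, v) 0)) a b"
    using rooted_iso_D[OF iso] by metis
  have bv: "ball (C2, v) 0 = (({v}, \<lambda>a b. if a \<in> {v} \<and> b \<in> {v} then snd C2 a b else 0), v)"
    using ball_eq[of "fst C2" "snd C2" v 0] by simp
  have "f v = 0" using f2 unfolding bv by simp
  moreover have "snd L1 (f v) (f v) = snd C2 v v" using f3 unfolding bv by simp
  ultimately show False using v unfolding L1_def C2_def by auto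
qed

lemma part2:
  "\<exists>Gs :: nat \<Rightarrow> nat graph pmf. (\<forall>n. finite_random_graph (Gs n)) \<and>
       (\<exists>M :: nat rgraph measure. random_rooted_graph M \<and>
            lw_conv (\<lambda>n. map_pmf bip (Gs n)) (bip_ball_prob M)) \<and>
       \<not> (\<exists>M :: nat rgraph measure. random_rooted_graph M \<and> lw_conv Gs (ball_prob M))"
proof (intro exI conjI)
  define Gs where "Gs n = return_pmf (if even n then L1 else C2)" for n :: nat
  show "\<forall>n. finite_random_graph (Gs n)" unfolding Gs_def using L1_frg C2_frg by simp
  show "random_rooted_graph (Mg (L1,0))" using Mg_random L1_ok by simp
  show "lw_conv (\<lambda>n. map_pmf bip (Gs n)) (bip_ball_prob (Mg (L1,0)))"
    unfolding lw_conv_def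
  proof (intro allI impI)
    fix r and H :: "nat rgraph"
    have "measure_pmf.prob (rooted_unif (map_pmf bip (Gs n))) {g. rooted_iso (ball g r) H}
       = bip_ball_prob (Mg (L1,0)) r H" for n
      unfolding Gs_def bip_Mg[OF disjI1[OF refl]] by (rule bip_prob) simp
    then show "(\<lambda>n. measure_pmf.prob (rooted_unif (map_pmf bip (Gs n))) {g. rooted_iso (ball g r) H})
      \<longlonglongrightarrow> bip_ball_prob (Mg (L1,0)) r H" by simp
  qed
  show "\<not> (\<exists>M :: nat rgraph measure. random_rooted_graph M \<and> lw_conv Gs (ball_prob M))"
  proof
    assume "\<exists>M :: nat rgraph measure. random_rooted_graph M \<and> lw_conv Gs (ball_prob M)"
    then obtain M :: "nat rgraph measure" where "lw_conv Gs (ball_prob M)" by blast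
    moreover have "finite_rgraph (L1, 0)" unfolding finite_rgraph_def using L1_ok by (simp add: L1_def)
    ultimately have lim: "(\<lambda>n. measure_pmf.prob (rooted_unif (Gs n)) {g. rooted_iso (ball g 0) (L1,0)})
        \<longlonglongrightarrow> ball_prob M 0 (L1,0)"
      unfolding lw_conv_def by blast
    define X where "X n = measure_pmf.prob (rooted_unif (Gs n)) {g. rooted_iso (ball g 0) (L1,0)}" for n
    have Xe: "X n = (if even n then 1 else 0)" for n
    proof (cases "even n")
      case True
      have "\<forall>v\<in>fst L1. rooted_iso (ball (L1, v) 0) (L1, 0) = True"
        using L1_ball0 by (simp add: L1_def)
      then show ?thesis unfolding X_def Gs_def using True
        by (subst prob_return_unif[where Q=True]) (auto simp: L1_def)
    next
      case False
      have "\<forall>v\<in>fst C2. rooted_iso (ball (C2, v) 0) (L1, 0) = False"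
        using C2_ball0 by simp
      then show ?thesis unfolding X_def Gs_def using False
        by (subst prob_return_unif[where Q=False]) (auto simp: C2_def)
    qed
    have lim': "X \<longlonglongrightarrow> ball_prob M 0 (L1,0)" using lim unfolding X_def .
    have "(X \<circ> (\<lambda>n. 2*n)) \<longlonglongrightarrow> ball_prob M 0 (L1,0)"
      by (rule LIMSEQ_subseq_LIMSEQ[OF lim']) (simp add: strict_mono_def)
    moreover have "(X \<circ> (\<lambda>n. 2*n)) = (\<lambda>n. 1)" using Xe by (simp add: o_def)
    ultimately have l1: "ball_prob M 0 (L1,0) = 1" using LIMSEQ_unique tendsto_const by metis
    have "(X \<circ> (\<lambda>n. 2*n+1)) \<longlonglongrightarrow> ball_prob M 0 (L1,0)"
      by (rule LIMSEQ_subseq_LIMSEQ[OF lim']) (simp add: strict_mono_def)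
    moreover have "(X \<circ> (\<lambda>n. 2*n+1)) = (\<lambda>n. 0)" using Xe by (simp add: o_def)
    ultimately have l0: "ball_prob M 0 (L1,0) = 0" using LIMSEQ_unique tendsto_const by metis
    show False using l0 l1 by simp
  qed
qed

lemma part3:
  "\<exists>(M1 :: nat rgraph measure) (M2 :: nat rgraph measure).
       random_rooted_graph M1 \<and> random_rooted_graph M2 \<and>
       (\<exists>Gs1 :: nat \<Rightarrow> nat graph pmf. (\<forall>n. finite_random_graph (Gs1 n)) \<and> lw_conv Gs1 (ball_prob M1)) \<and>
       (\<exists>Gs2 :: nat \<Rightarrow> nat graph pmf. (\<forall>n. finite_random_graph (Gs2 n)) \<and> lw_conv Gs2 (ball_prob M2)) \<and>
       ball_prob M1 \<noteq> ball_prob M2 \<and>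
       bip_ball_prob M1 = bip_ball_prob M2"
proof (intro exI conjI)
  show "random_rooted_graph (Mg (L1,0))" using Mg_random L1_ok by simp
  show "random_rooted_graph (Mg (C2,0))" using Mg_random C2_ok by simp
  show "\<forall>n. finite_random_graph ((\<lambda>_. return_pmf L1) n)" using L1_frg by simp
  show "\<forall>n. finite_random_graph ((\<lambda>_. return_pmf C2) n)" using C2_frg by simp
  show "lw_conv (\<lambda>_. return_pmf L1) (ball_prob (Mg (L1,0)))"
    unfolding lw_conv_def
  proof (intro allI impI)
    fix r and H :: "nat rgraph"
    have "\<forall>v\<in>fst L1. rooted_iso (ball (L1, v) r) H = rooted_iso (ball (L1, 0) r) H"
      by (simp add: L1_def)
    then have "measure_pmf.prob (rooted_unif (return_pmf L1)) {g. rooted_iso (ball g r) H}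
        = ball_prob (Mg (L1,0)) r H"
      unfolding ball_prob_def Mg_prob by (subst prob_return_unif) (auto simp: L1_def)
    then show "(\<lambda>n. measure_pmf.prob (rooted_unif (return_pmf L1)) {g. rooted_iso (ball g r) H})
       \<longlonglongrightarrow> ball_prob (Mg (L1,0)) r H" by simp
  qed
  show "lw_conv (\<lambda>_. return_pmf C2) (ball_prob (Mg (C2,0)))"
    unfolding lw_conv_def
  proof (intro allI impI)
    fix r and H :: "nat rgraph"
    have "\<forall>v\<in>fst C2. rooted_iso (ball (C2, v) r) H = rooted_iso (Kr r) H"
      using C2_ball iso_Kr_eq by blast
    moreover have "rooted_iso (ball (C2, 0) r) H = rooted_iso (Kr r) H"
    proof -
      have "(0::nat) \<in> fst C2" by (simp add: C2_def)
      then show ?thesis using C2_ball iso_Kr_eq by blast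
    qed
    ultimately have "measure_pmf.prob (rooted_unif (return_pmf C2)) {g. rooted_iso (ball g r) H}
        = ball_prob (Mg (C2,0)) r H"
      unfolding ball_prob_def Mg_prob by (subst prob_return_unif) (auto simp: C2_def)
    then show "(\<lambda>n. measure_pmf.prob (rooted_unif (return_pmf C2)) {g. rooted_iso (ball g r) H})
       \<longlonglongrightarrow> ball_prob (Mg (C2,0)) r H" by simp
  qed
  show "ball_prob (Mg (L1,0)) \<noteq> ball_prob (Mg (C2,0))"
  proof
    assume "ball_prob (Mg (L1,0)) = ball_prob (Mg (C2,0))"
    then have "ball_prob (Mg (L1,0)) 0 (L1,0) = ball_prob (Mg (C2,0)) 0 (L1,0)" by simp
    moreover have "ball_prob (Mg (L1,0)) 0 (L1,0) = 1" unfolding ball_prob_def Mg_prob using L1_ball0 by simp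
    moreover have "ball_prob (Mg (C2,0)) 0 (L1,0) = 0" unfolding ball_prob_def Mg_prob
      using C2_ball0[of 0] by (simp add: C2_def)
    ultimately show False by simp
  qed
  show "bip_ball_prob (Mg (L1,0)) = bip_ball_prob (Mg (C2,0))"
    by (intro ext) (simp add: bip_Mg)
qed

theorem proposition1p1:
  shows
   "(\<forall>(Gs :: nat \<Rightarrow> 'v graph pmf) (M :: 'v rgraph measure).
       (\<forall>n. finite_random_graph (Gs n)) \<and> random_rooted_graph M \<and> lw_conv Gs (ball_prob M)
       \<longrightarrow> lw_conv (\<lambda>n. map_pmf bip (Gs n)) (bip_ball_prob M))
  \<and> (\<exists>Gs :: nat \<Rightarrow> nat graph pmf. (\<forall>n. finite_random_graph (Gs n)) \<and>
       (\<exists>M :: nat rgraph measure. random_rooted_graph M \<and>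
            lw_conv (\<lambda>n. map_pmf bip (Gs n)) (bip_ball_prob M)) \<and>
       \<not> (\<exists>M :: nat rgraph measure. random_rooted_graph M \<and> lw_conv Gs (ball_prob M)))
  \<and> (\<exists>(M1 :: nat rgraph measure) (M2 :: nat rgraph measure).
       random_rooted_graph M1 \<and> random_rooted_graph M2 \<and>
       (\<exists>Gs1 :: nat \<Rightarrow> nat graph pmf. (\<forall>n. finite_random_graph (Gs1 n)) \<and> lw_conv Gs1 (ball_prob M1)) \<and>
       (\<exists>Gs2 :: nat \<Rightarrow> nat graph pmf. (\<forall>n. finite_random_graph (Gs2 n)) \<and> lw_conv Gs2 (ball_prob M2)) \<and>
       ball_prob M1 \<noteq> ball_prob M2 \<and>
       bip_ball_prob M1 = bip_ball_prob M2)"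
  using part1 part2 part3 by blast

end
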